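(* Let $X,Y$ be real Hilbert spaces and $a:X\times Y\to\mathbb{R}\cup\{+\infty\}$ such that for every $y\in Y$ the function $a(\cdot,y)$ is proper and $\Phi_{lsc}$-convex on $X$, and for every $x\in X$ the function $a(x,\cdot)$ is concave on $Y$. Suppose that for every $\beta<\inf_{x\in X}\sup_{y\in Y}a(x,y)$ and every $\varepsilon>0$ there exist $y_1,y_2\in Y$ and $\bar x\in X$ with $\bar x\in\mathrm{dom}\,a(\cdot,y_1)\cap\mathrm{dom}\,a(\cdot,y_2)$, $a(\bar x,y_1)\ge\beta$, $a(\bar x,y_2)\ge\beta$, such that $a(\cdot,y_1)$ and $a(\cdot,y_2)$ satisfy $ZS(\varepsilon,\bar x)$. Then $\sup_{y\in Y}\inf_{x\in X}a(x,y)=\inf_{x\in X}\sup_{y\in Y}a(x,y)$.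
   Context: $\Phi_{lsc}$ is the class of functions $\varphi(x)=-a\|x\|^2+\langle v,x\rangle+c$ ($a\ge0$, $v\in X^*$, $c\in\mathbb{R}$); $\mathrm{supp}(f)=\{\varphi\in\Phi_{lsc}:\varphi\le f\}$; $f$ is $\Phi_{lsc}$-convex if $f=\sup\mathrm{supp}(f)$ pointwise; proper means $\mathrm{supp}(f)\ne\emptyset$ and $\mathrm{dom}(f)\ne\emptyset$. For $\varepsilon\ge0$, $\partial^\varepsilon_{lsc}f(\bar x)$ is the set of $(a,v)\in\mathbb{R}_+\times X^*$ with $f(x)-f(\bar x)\ge\langle v,x-\bar x\rangle-a\|x\|^2+a\|\bar x\|^2-\varepsilon$ for all $x\in X$. Functions $f,g$ satisfy $ZS(\varepsilon,\bar x)$ if $0=(0,0)\in\mathrm{co}(\partial^\varepsilon_{lsc}f(\bar x)\cup\partial^\varepsilon_{lsc}g(\bar x))$, convex hull in $\mathbb{R}\times X^*$. *)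

theory Defs
  imports "HOL-Analysis.Analysis"
begin

text \<open>Functions with values in the extended reals; the paper's range
  \<open>\<real> \<union> {+\<infinity>}\<close> is enforced by separate non-(-\<infinity>) hypotheses.
  The dual \<open>X^*\<close> of the Hilbert space is identified with \<open>X\<close> (Riesz),
  so \<open>\<langle>v,x\<rangle>\<close> is \<open>inner v x\<close>.\<close>

definition phi_lsc :: "('a::real_inner \<Rightarrow> real) set" where
  "phi_lsc = {\<phi>. \<exists>a v c. a \<ge> 0 \<and> \<phi> = (\<lambda>x. - a * (norm x)\<^sup>2 + inner v x + c)}"

definition supp_lsc :: "('a::real_inner \<Rightarrow> ereal) \<Rightarrow> ('a \<Rightarrow> real) set" where
  "supp_lsc f = {\<phi> \<in> phi_lsc. \<forall>x. ereal (\<phi> x) \<le> f x}"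

definition phi_lsc_convex :: "('a::real_inner \<Rightarrow> ereal) \<Rightarrow> bool" where
  "phi_lsc_convex f \<longleftrightarrow> (\<forall>x. f x = (SUP \<phi>\<in>supp_lsc f. ereal (\<phi> x)))"

definition edom :: "('a \<Rightarrow> ereal) \<Rightarrow> 'a set" where
  "edom f = {x. f x < \<infinity>}"

definition proper_lsc :: "('a::real_inner \<Rightarrow> ereal) \<Rightarrow> bool" where
  "proper_lsc f \<longleftrightarrow> supp_lsc f \<noteq> {} \<and> edom f \<noteq> {}"

text \<open>\<open>\<epsilon>\<close>-subdifferential; the defining inequality
  \<open>f x - f xb \<ge> \<langle>v,x-xb\<rangle> - a\<parallel>x\<parallel>\<^sup>2 + a\<parallel>xb\<parallel>\<^sup>2 - \<epsilon>\<close> is written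
  with \<open>f xb\<close> moved to the right-hand side (equivalent for finite \<open>f xb\<close>).\<close>
definition subdiff_lsc :: "real \<Rightarrow> ('a::real_inner \<Rightarrow> ereal) \<Rightarrow> 'a \<Rightarrow> (real \<times> 'a) set" where
  "subdiff_lsc \<epsilon> f xb = {(a, v). a \<ge> 0 \<and>
     (\<forall>x. f x \<ge> f xb + ereal (inner v (x - xb) - a * (norm x)\<^sup>2 + a * (norm xb)\<^sup>2 - \<epsilon>))}"

definition ZS :: "real \<Rightarrow> 'a \<Rightarrow> ('a::real_inner \<Rightarrow> ereal) \<Rightarrow> ('a \<Rightarrow> ereal) \<Rightarrow> bool" where
  "ZS \<epsilon> xb f g \<longleftrightarrow> (0::real, 0::'a) \<in> convex hull (subdiff_lsc \<epsilon> f xb \<union> subdiff_lsc \<epsilon> g xb)"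

definition concave_ereal :: "('b::real_vector \<Rightarrow> ereal) \<Rightarrow> bool" where
  "concave_ereal h \<longleftrightarrow> (\<forall>y1 y2 t. 0 \<le> t \<and> t \<le> 1 \<longrightarrow>
      h ((1 - t) *\<^sub>R y1 + t *\<^sub>R y2) \<ge> ereal (1 - t) * h y1 + ereal t * h y2)"

end

theory Submission
  imports Defs
begin

lemma hull_union_two_sub:
  fixes S T :: "'m::real_vector set"
  assumes "convex S" "S \<noteq> {}" "convex T" "T \<noteq> {}"
    and "x \<in> convex hull (S \<union> T)"
  shows "\<exists>u v s t. x = u *\<^sub>R s + v *\<^sub>R t \<and> u \<ge> 0 \<and> v \<ge> 0 \<and> u + v = 1 \<and> s \<in> S \<and> t \<in> T"
proof -
  define I :: "nat set" where "I = {1, 2}"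
  define s where "s i = (if i = (1::nat) then S else T)" for i
  have "\<Union>(s ` I) = S \<union> T"
    using s_def I_def by auto
  then have e1: "convex hull (\<Union>(s ` I)) = convex hull (S \<union> T)"
    by auto
  have e2: "convex hull \<Union>(s ` I) =
    {\<Sum> i\<in>I. c i *\<^sub>R sa i | c sa. (\<forall>i\<in>I. 0 \<le> c i) \<and> sum c I = 1 \<and> (\<forall>i\<in>I. sa i \<in> s i)}"
      using assms s_def I_def
      by (subst convex_hull_finite_union) auto
  obtain c sa where "x = (\<Sum> i\<in>I. c i *\<^sub>R sa i)" "(\<forall>i\<in>I. 0 \<le> c i)" "sum c I = 1" "(\<forall>i\<in>I. sa i \<in> s i)"
  proof -
    have "x \<in> {\<Sum> i\<in>I. c i *\<^sub>R sa i | c sa. (\<forall>i\<in>I. 0 \<le> c i) \<and> sum c I = 1 \<and> (\<forall>i\<in>I. sa i \<in> s i)}"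
      using assms(5) e1 e2 by simp
    then show ?thesis using that by blast
  qed
  then show ?thesis using s_def I_def
    by (intro exI[of _ "c 1"] exI[of _ "c 2"] exI[of _ "sa 1"] exI[of _ "sa 2"]) auto
qed

lemma subdiff_alt:
  assumes "f xb = ereal F"
  shows "subdiff_lsc e f xb = {(a, v). a \<ge> 0 \<and>
     (\<forall>x. f x \<ge> ereal (F + (inner v (x - xb) - a * (norm x)\<^sup>2 + a * (norm xb)\<^sup>2 - e)))}"
  using assms unfolding subdiff_lsc_def by auto

lemma conv_step:
  fixes F e :: real and xb :: "'a::real_inner" and f :: "'a \<Rightarrow> ereal"
  assumes f_nm: "\<And>x. f x \<noteq> -\<infinity>"
  and h: "0 \<le> a" "\<forall>x. ereal (F + (inner v (x - xb) - a * (norm x)\<^sup>2 + a * (norm xb)\<^sup>2 - e)) \<le> f x"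
    "0 \<le> a'" "\<forall>x. ereal (F + (inner v' (x - xb) - a' * (norm x)\<^sup>2 + a' * (norm xb)\<^sup>2 - e)) \<le> f x"
    "0 \<le> (u::real)" "0 \<le> w" "u + w = 1"
  shows "0 \<le> u * a + w * a' \<and>
       (\<forall>x. ereal (F + (inner (u *\<^sub>R v + w *\<^sub>R v') (x - xb) - (u * a + w * a') * (norm x)\<^sup>2 +
                 (u * a + w * a') * (norm xb)\<^sup>2 - e)) \<le> f x)"
proof (intro conjI allI)
    show "0 \<le> u * a + w * a'" using h by simp
    fix x
    show "ereal (F + (inner (u *\<^sub>R v + w *\<^sub>R v') (x - xb) - (u * a + w * a') * (norm x)\<^sup>2 +
                 (u * a + w * a') * (norm xb)\<^sup>2 - e)) \<le> f x"
    proof (cases "f x")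
      case (real r)
      have 1: "F + (inner v (x - xb) - a * (norm x)\<^sup>2 + a * (norm xb)\<^sup>2 - e) \<le> r"
        using h(2)[rule_format, of x] real by simp
      have 2: "F + (inner v' (x - xb) - a' * (norm x)\<^sup>2 + a' * (norm xb)\<^sup>2 - e) \<le> r"
        using h(4)[rule_format, of x] real by simp
      have "u * (F + (inner v (x - xb) - a * (norm x)\<^sup>2 + a * (norm xb)\<^sup>2 - e))
          + w * (F + (inner v' (x - xb) - a' * (norm x)\<^sup>2 + a' * (norm xb)\<^sup>2 - e)) \<le> u * r + w * r"
        using 1 2 h(5,6) by (intro add_mono mult_left_mono) auto
      also have "\<dots> = r" using h(7) by (metis distrib_right mult_1)
      finally have fin: "u * (F + (inner v (x - xb) - a * (norm x)\<^sup>2 + a * (norm xb)\<^sup>2 - e))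
          + w * (F + (inner v' (x - xb) - a' * (norm x)\<^sup>2 + a' * (norm xb)\<^sup>2 - e)) \<le> r" .
      have w: "w = 1 - u" using h(7) by simp
      have "F + (inner (u *\<^sub>R v + w *\<^sub>R v') (x - xb) - (u * a + w * a') * (norm x)\<^sup>2 +
                 (u * a + w * a') * (norm xb)\<^sup>2 - e) = u * (F + (inner v (x - xb) - a * (norm x)\<^sup>2 + a * (norm xb)\<^sup>2 - e))
          + w * (F + (inner v' (x - xb) - a' * (norm x)\<^sup>2 + a' * (norm xb)\<^sup>2 - e))"
        unfolding w by (simp add: inner_add_left algebra_simps)
      then show ?thesis using real fin by simp
    next
      case PInf then show ?thesis by simp
    next
      case MInf then show ?thesis using f_nm by simp
    qed
  qed

lemma subdiff_convex:
  assumes "f xb = ereal F" "\<And>x. f x \<noteq> -\<infinity>"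
  shows "convex (subdiff_lsc e f xb)"
  unfolding subdiff_alt[where f=f and xb=xb and F=F, OF assms(1)] convex_def
proof (intro ballI allI impI)
  fix p q and u w :: real
  assume p: "p \<in> {(a, v). a \<ge> 0 \<and>
     (\<forall>x. f x \<ge> ereal (F + (inner v (x - xb) - a * (norm x)\<^sup>2 + a * (norm xb)\<^sup>2 - e)))}"
    and q: "q \<in> {(a, v). a \<ge> 0 \<and>
     (\<forall>x. f x \<ge> ereal (F + (inner v (x - xb) - a * (norm x)\<^sup>2 + a * (norm xb)\<^sup>2 - e)))}"
    and uw: "0 \<le> u" "0 \<le> w" "u + w = 1"
  obtain a v where pv: "p = (a, v)" by (cases p)
  obtain a' v' where qv: "q = (a', v')" by (cases q)
  have h1: "0 \<le> a" "\<forall>x. ereal (F + (inner v (x - xb) - a * (norm x)\<^sup>2 + a * (norm xb)\<^sup>2 - e)) \<le> f x"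
    using p pv by auto
  have h2: "0 \<le> a'" "\<forall>x. ereal (F + (inner v' (x - xb) - a' * (norm x)\<^sup>2 + a' * (norm xb)\<^sup>2 - e)) \<le> f x"
    using q qv by auto
  from conv_step[OF assms(2) h1 h2 uw]
  show "u *\<^sub>R p + w *\<^sub>R q \<in> {(a, v). a \<ge> 0 \<and>
     (\<forall>x. f x \<ge> ereal (F + (inner v (x - xb) - a * (norm x)\<^sup>2 + a * (norm xb)\<^sup>2 - e)))}"
    using pv qv by simp
qed

lemma key:
  fixes f g :: "'a::real_inner \<Rightarrow> ereal"
  assumes fnm: "\<And>x. f x \<noteq> -\<infinity>" and gnm: "\<And>x. g x \<noteq> -\<infinity>"
    and F: "f xb = ereal F" and G: "g xb = ereal G" and Fb: "\<beta> \<le> F" and Gb: "\<beta> \<le> G"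
    and zs: "ZS \<epsilon> xb f g"
  shows "\<exists>t. 0 \<le> t \<and> t \<le> 1 \<and> (\<forall>x. ereal (\<beta> - \<epsilon>) \<le> ereal (1 - t) * f x + ereal t * g x)"
proof -
  let ?A = "subdiff_lsc \<epsilon> f xb" and ?B = "subdiff_lsc \<epsilon> g xb"
  have cA: "convex ?A" by (rule subdiff_convex[where f=f and xb=xb and F=F, OF F fnm])
  have cB: "convex ?B" by (rule subdiff_convex[where f=g and xb=xb and F=G, OF G gnm])
  have z: "(0, 0) \<in> convex hull (?A \<union> ?B)" using zs unfolding ZS_def by simp
  show ?thesis
  proof (cases "?A = {}")
    case True
    then have "(0, 0) \<in> ?B" using z cB True by (metis convex_hull_eq sup_bot_left)
    then have gi: "\<forall>x. g x \<ge> ereal (G - \<epsilon>)" unfolding subdiff_alt[where f=g and xb=xb and F=G, OF G] by simp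
    show ?thesis
    proof (intro exI[of _ 1] conjI allI)
      fix x
      have "ereal (\<beta> - \<epsilon>) \<le> ereal (G - \<epsilon>)" using Gb by simp
      also have "\<dots> \<le> g x" using gi by simp
      finally show "ereal (\<beta> - \<epsilon>) \<le> ereal (1 - 1) * f x + ereal 1 * g x" by (simp add: zero_ereal_def[symmetric])
    qed auto
  next
    case nA: False
    show ?thesis
    proof (cases "?B = {}")
      case True
      then have "(0, 0) \<in> ?A" using z cA True by (metis convex_hull_eq sup_bot_right)
      then have fi: "\<forall>x. f x \<ge> ereal (F - \<epsilon>)" unfolding subdiff_alt[where f=f and xb=xb and F=F, OF F] by simp
      show ?thesis
      proof (intro exI[of _ 0] conjI allI)
        fix x
        have "ereal (\<beta> - \<epsilon>) \<le> ereal (F - \<epsilon>)" using Fb by simp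
        also have "\<dots> \<le> f x" using fi by simp
        finally show "ereal (\<beta> - \<epsilon>) \<le> ereal (1 - 0) * f x + ereal 0 * g x" by (simp add: zero_ereal_def[symmetric])
      qed auto
    next
      case nB: False
      obtain u w p q where pq: "(0, 0) = u *\<^sub>R p + w *\<^sub>R q" "u \<ge> 0" "w \<ge> 0" "u + w = 1" "p \<in> ?A" "q \<in> ?B"
        using hull_union_two_sub[OF cA nA cB nB z] by blast
      obtain a1 v1 where p: "p = (a1, v1)" by (cases p)
      obtain a2 v2 where q: "q = (a2, v2)" by (cases q)
      have fi: "\<forall>x. f x \<ge> ereal (F + (inner v1 (x - xb) - a1 * (norm x)\<^sup>2 + a1 * (norm xb)\<^sup>2 - \<epsilon>))"
        using pq(5) p unfolding subdiff_alt[where f=f and xb=xb and F=F, OF F] by simp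
      have gi: "\<forall>x. g x \<ge> ereal (G + (inner v2 (x - xb) - a2 * (norm x)\<^sup>2 + a2 * (norm xb)\<^sup>2 - \<epsilon>))"
        using pq(6) q unfolding subdiff_alt[where f=g and xb=xb and F=G, OF G] by simp
      have s1: "u * a1 + w * a2 = 0" and s2: "u *\<^sub>R v1 + w *\<^sub>R v2 = 0"
        using pq(1) p q by auto
      show ?thesis
      proof (intro exI[of _ w] conjI allI)
        show "0 \<le> w" using pq by simp
        show "w \<le> 1" using pq by simp
        fix x
        have u: "1 - w = u" using pq by simp
        define r1 where "r1 = F + (inner v1 (x - xb) - a1 * (norm x)\<^sup>2 + a1 * (norm xb)\<^sup>2 - \<epsilon>)"
        define r2 where "r2 = G + (inner v2 (x - xb) - a2 * (norm x)\<^sup>2 + a2 * (norm xb)\<^sup>2 - \<epsilon>)"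
        have "u * r1 + w * r2 = u * F + w * G + inner (u *\<^sub>R v1 + w *\<^sub>R v2) (x - xb)
            - (u * a1 + w * a2) * ((norm x)\<^sup>2 - (norm xb)\<^sup>2) - (u + w) * \<epsilon>"
          unfolding r1_def r2_def by (simp add: inner_add_left algebra_simps)
        also have "\<dots> = u * F + w * G - \<epsilon>" using s1 s2 pq(4) by simp
        also have "\<dots> \<ge> u * \<beta> + w * \<beta> - \<epsilon>"
          using Fb Gb pq(2,3) by (smt (verit) mult_left_mono)
        finally have "u * r1 + w * r2 \<ge> \<beta> - \<epsilon>" using pq(4) by (metis distrib_right mult_1)
        then have "ereal (\<beta> - \<epsilon>) \<le> ereal (u * r1) + ereal (w * r2)" by simp
        also have "\<dots> = ereal u * ereal r1 + ereal w * ereal r2" by simp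
        also have "\<dots> \<le> ereal u * f x + ereal w * g x"
          using fi[rule_format, of x] gi[rule_format, of x] pq(2,3) unfolding r1_def r2_def
          by (intro add_mono ereal_mult_left_mono) auto
        finally show "ereal (\<beta> - \<epsilon>) \<le> ereal (1 - w) * f x + ereal w * g x" using u by simp
      qed
    qed
  qed
qed

theorem mainTheorem13:
  fixes a :: "'x::{real_inner,complete_space} \<Rightarrow> 'y::{real_inner,complete_space} \<Rightarrow> ereal"
  assumes no_minf: "\<And>x y. a x y \<noteq> -\<infinity>"
    and convx: "\<And>y. proper_lsc (\<lambda>x. a x y) \<and> phi_lsc_convex (\<lambda>x. a x y)"
    and concy: "\<And>x. concave_ereal (\<lambda>y. a x y)"
    and hyp: "\<And>\<beta> \<epsilon>. ereal \<beta> < (INF x. SUP y. a x y) \<Longrightarrow> \<epsilon> > 0 \<Longrightarrow>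
        \<exists>y1 y2 xb. xb \<in> edom (\<lambda>x. a x y1) \<inter> edom (\<lambda>x. a x y2)
          \<and> a xb y1 \<ge> ereal \<beta> \<and> a xb y2 \<ge> ereal \<beta>
          \<and> ZS \<epsilon> xb (\<lambda>x. a x y1) (\<lambda>x. a x y2)"
  shows "(SUP y. INF x. a x y) = (INF x. SUP y. a x y)"
proof (rule antisym)
  show "(SUP y. INF x. a x y) \<le> (INF x. SUP y. a x y)"
  proof (intro SUP_least INF_greatest)
    fix y x
    have "(INF x. a x y) \<le> a x y" by (rule INF_lower) simp
    also have "\<dots> \<le> (SUP y. a x y)" by (rule SUP_upper) simp
    finally show "(INF x. a x y) \<le> (SUP y. a x y)" .
  qed
next
  let ?S = "SUP y. INF x. a x y" and ?B = "INF x. SUP y. a x y"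
  have main: "ereal (\<beta> - \<epsilon>) \<le> ?S" if b: "ereal \<beta> < ?B" and e: "\<epsilon> > 0" for \<beta> \<epsilon>
  proof -
    obtain y1 y2 xb where h: "xb \<in> edom (\<lambda>x. a x y1) \<inter> edom (\<lambda>x. a x y2)"
      "a xb y1 \<ge> ereal \<beta>" "a xb y2 \<ge> ereal \<beta>" "ZS \<epsilon> xb (\<lambda>x. a x y1) (\<lambda>x. a x y2)"
      using hyp[OF b e] by blast
    obtain F where F: "a xb y1 = ereal F"
      using h(1) no_minf[of xb y1] unfolding edom_def by (cases "a xb y1") auto
    obtain G where G: "a xb y2 = ereal G"
      using h(1) no_minf[of xb y2] unfolding edom_def by (cases "a xb y2") auto
    obtain t where t: "0 \<le> t" "t \<le> 1"
      "\<forall>x. ereal (\<beta> - \<epsilon>) \<le> ereal (1 - t) * a x y1 + ereal t * a x y2"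
      using key[where f="\<lambda>x. a x y1" and g="\<lambda>x. a x y2" and xb=xb and F=F and G=G and \<beta>=\<beta> and \<epsilon>=\<epsilon>]
        no_minf F G h(2,3) h(4) by auto
    let ?y = "(1 - t) *\<^sub>R y1 + t *\<^sub>R y2"
    have "ereal (\<beta> - \<epsilon>) \<le> (INF x. a x ?y)"
    proof (rule INF_greatest)
      fix x
      have "ereal (1 - t) * a x y1 + ereal t * a x y2 \<le> a x ?y"
        using concy[of x] t(1,2) unfolding concave_ereal_def by blast
      then show "ereal (\<beta> - \<epsilon>) \<le> a x ?y" using t(3) order_trans by blast
    qed
    also have "\<dots> \<le> ?S" by (rule SUP_upper) simp
    finally show ?thesis .
  qed
  show "?B \<le> ?S"
  proof (rule ccontr)
    assume "\<not> ?B \<le> ?S"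
    then have "?S < ?B" by simp
    then obtain \<beta> where b1: "?S < ereal \<beta>" and b2: "ereal \<beta> < ?B" using ereal_dense2 by blast
    then obtain \<gamma> where g1: "?S < ereal \<gamma>" and g2: "ereal \<gamma> < ereal \<beta>" using ereal_dense2 by blast
    have "ereal (\<beta> - (\<beta> - \<gamma>)) \<le> ?S" using main[OF b2, of "\<beta> - \<gamma>"] g2 by simp
    then show False using g1 by simp
  qed
qed

end
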